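(* For every $n\ge1$ and every LHS assemblage $\{\rho_{b|y}\}$ on $\mathbb C^2$, $$|\mathsf W_n|\ \le\ \frac{\sin\left(\frac{\pi}{2}\mathsf T_n\right)}{n\sin\left(\frac{\pi}{2n}\right)}.$$
   Context: Let $\theta_y=y\pi/n$. An LHS assemblage on $\mathbb C^2$ with inputs $y\in\{0,\dots,n-1\}$ and outcomes $b\in\{0,1,\varnothing\}$ is $\rho_{b|y}=\sum_\lambda p(b|y,\lambda)\rho_\lambda$, where $\{\rho_\lambda\}$ is a finite family of positive semidefinite $2\times2$ matrices with $\sum_\lambda\mathrm{tr}\rho_\lambda=1$ and $p(b|y,\lambda)$ are conditional probabilities. With $Z,X$ the Pauli matrices, $\mathsf W_n:=\frac1n\sum_{y=0}^{n-1}\mathrm{tr}\big[(\cos\theta_y Z+\sin\theta_y X)(\rho_{0|y}-\rho_{1|y})\big]$ and $\mathsf T_n:=\frac1n\sum_{y=0}^{n-1}\mathrm{tr}(\rho_{0|y}+\rho_{1|y})$. *)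

theory Defs
  imports "HOL-Analysis.Analysis"
begin

type_synonym cmat2 = "complex^2^2"

definition adjoint2 :: "cmat2 \<Rightarrow> cmat2" where
  "adjoint2 A = (\<chi> i j. cnj (A $ j $ i))"

definition psd2 :: "cmat2 \<Rightarrow> bool" where
  "psd2 A \<longleftrightarrow> adjoint2 A = A \<and>
     (\<forall>v :: complex^2. let q = (\<Sum>i\<in>UNIV. cnj (v $ i) * (A *v v) $ i) in Im q = 0 \<and> Re q \<ge> 0)"

definition pauliZ :: cmat2 where
  "pauliZ = (\<chi> i j. if i = j then (if i = 0 then 1 else -1) else 0)"

definition pauliX :: cmat2 where
  "pauliX = (\<chi> i j. if i = j then 0 else 1)"

datatype outcome = Out0 | Out1 | OutNull

definition theta :: "nat \<Rightarrow> nat \<Rightarrow> real" where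
  "theta n y = real y * pi / real n"

definition LHS_assemblage :: "nat \<Rightarrow> (nat \<Rightarrow> outcome \<Rightarrow> cmat2) \<Rightarrow> bool" where
  "LHS_assemblage n rho \<longleftrightarrow>
     (\<exists>(L :: nat set) (sigma :: nat \<Rightarrow> cmat2) (p :: outcome \<Rightarrow> nat \<Rightarrow> nat \<Rightarrow> real).
        finite L \<and>
        (\<forall>l\<in>L. psd2 (sigma l)) \<and>
        (\<Sum>l\<in>L. trace (sigma l)) = 1 \<and>
        (\<forall>y<n. \<forall>l\<in>L. (\<forall>b. p b y l \<ge> 0) \<and> p Out0 y l + p Out1 y l + p OutNull y l = 1) \<and>
        (\<forall>y<n. \<forall>b. rho y b = (\<Sum>l\<in>L. p b y l *\<^sub>R sigma l)))"

definition W_n :: "nat \<Rightarrow> (nat \<Rightarrow> outcome \<Rightarrow> cmat2) \<Rightarrow> complex" where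
  "W_n n rho = (1 / of_nat n) * (\<Sum>y<n.
      trace ((cos (theta n y) *\<^sub>R pauliZ + sin (theta n y) *\<^sub>R pauliX)
             ** (rho y Out0 - rho y Out1)))"

definition T_n :: "nat \<Rightarrow> (nat \<Rightarrow> outcome \<Rightarrow> cmat2) \<Rightarrow> complex" where
  "T_n n rho = (1 / of_nat n) * (\<Sum>y<n. trace (rho y Out0 + rho y Out1))"

end

theory Submission
  imports Defs
begin

definition phc :: "real \<Rightarrow> real \<Rightarrow> real" where
  "phc c x = sin x - cos c * x"

definition Gc :: "real \<Rightarrow> real \<Rightarrow> real" where
  "Gc c x = phc c (max (-c) (min c x))"

lemma cos_ge_cos_c:
  assumes "0 \<le> c" "c \<le> pi" "\<bar>x\<bar> \<le> c"
  shows "cos c \<le> cos x"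
proof -
  have "cos c \<le> cos \<bar>x\<bar>" using assms by (intro cos_monotone_0_pi_le) auto
  also have "cos \<bar>x\<bar> = cos x" by (cases "x \<ge> 0") auto
  finally show ?thesis .
qed

lemma cos_le_cos_c:
  assumes "0 \<le> c" "c \<le> \<bar>x\<bar>" "\<bar>x\<bar> \<le> pi"
  shows "cos x \<le> cos c"
proof -
  have "cos \<bar>x\<bar> \<le> cos c" using assms by (intro cos_monotone_0_pi_le) auto
  also have "cos \<bar>x\<bar> = cos x" by (cases "x \<ge> 0") auto
  finally show ?thesis using \<open>cos \<bar>x\<bar> \<le> cos c\<close> by simp
qed

lemma phc_deriv: "DERIV (phc c) x :> cos x - cos c"
  unfolding phc_def by (auto intro!: derivative_eq_intros)

lemma phc_mono:
  assumes "0 \<le> c" "c \<le> pi" "-c \<le> a" "a \<le> b" "b \<le> c"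
  shows "phc c a \<le> phc c b"
  using assms(4) 
proof (rule DERIV_nonneg_imp_nondecreasing)
  fix x assume "a \<le> x" "x \<le> b"
  then have "cos c \<le> cos x" using assms by (intro cos_ge_cos_c) auto
  then show "\<exists>y. DERIV (phc c) x :> y \<and> y \<ge> 0" using phc_deriv[of c x] by (intro exI[of _ "cos x - cos c"]) auto
qed

lemma phc_anti_r:
  assumes "0 \<le> c" "c \<le> a" "a \<le> b" "b \<le> pi"
  shows "phc c b \<le> phc c a"
  using assms(3) 
proof (rule DERIV_nonpos_imp_nonincreasing)
  fix x assume "a \<le> x" "x \<le> b"
  then have "cos x \<le> cos c" using assms by (intro cos_le_cos_c) auto
  then show "\<exists>y. DERIV (phc c) x :> y \<and> y \<le> 0" using phc_deriv[of c x] by (intro exI[of _ "cos x - cos c"]) auto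
qed

lemma phc_anti_l:
  assumes "0 \<le> c" "-pi \<le> a" "a \<le> b" "b \<le> -c"
  shows "phc c b \<le> phc c a"
  using assms(3) 
proof (rule DERIV_nonpos_imp_nonincreasing)
  fix x assume "a \<le> x" "x \<le> b"
  then have "cos x \<le> cos c" using assms by (intro cos_le_cos_c) auto
  then show "\<exists>y. DERIV (phc c) x :> y \<and> y \<le> 0" using phc_deriv[of c x] by (intro exI[of _ "cos x - cos c"]) auto
qed

lemma Gc_mono:
  assumes "0 \<le> c" "c \<le> pi" "a \<le> b"
  shows "Gc c a \<le> Gc c b"
  unfolding Gc_def using assms by (intro phc_mono) auto

lemma Gc_bounds:
  assumes "0 \<le> c" "c \<le> pi"
  shows "phc c (-c) \<le> Gc c x" "Gc c x \<le> phc c c"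
  unfolding Gc_def using assms by (auto intro!: phc_mono)

lemma D_mono:
  assumes "0 \<le> c" "c \<le> pi" "-pi \<le> a" "a \<le> b" "b \<le> pi"
  shows "phc c b - phc c a \<le> Gc c b - Gc c a"
proof -
  have L: "phc c b - Gc c b \<le> phc c a - Gc c a" 
  proof (cases "b \<le> -c")
    case True
    then show ?thesis unfolding Gc_def using assms phc_anti_l[of c a b] by auto
  next
    case nb: False
    show ?thesis
    proof (cases "a \<le> -c")
      case True
      have "phc c b - Gc c b \<le> 0"
      proof (cases "b \<le> c")
        case True then show ?thesis unfolding Gc_def using nb by auto
      next
        case False then show ?thesis unfolding Gc_def using assms phc_anti_r[of c c b] by auto
      qed
      moreover have "0 \<le> phc c a - Gc c a"
        unfolding Gc_def using True assms phc_anti_l[of c a "-c"] by auto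
      ultimately show ?thesis by linarith
    next
      case na: False
      show ?thesis
      proof (cases "a \<le> c")
        case True
        have "phc c b - Gc c b \<le> 0"
        proof (cases "b \<le> c")
          case True then show ?thesis unfolding Gc_def using nb by auto
        next
          case False then show ?thesis unfolding Gc_def using assms phc_anti_r[of c c b] by auto
        qed
        moreover have "phc c a - Gc c a = 0" unfolding Gc_def using True na by auto
        ultimately show ?thesis by linarith
      next
        case False
        then show ?thesis unfolding Gc_def using assms phc_anti_r[of c a b] by auto
      qed
    qed
  qed
  then show ?thesis by linarith
qed

lemma abs_cos_shift: "\<bar>cos (x + of_int k * pi)\<bar> = \<bar>cos x\<bar>"
proof -
  have s: "sin (of_int k * pi) = 0" using sin_zero_iff_int2 by blast
  have "(cos (of_int k * pi))^2 = 1" using sin_cos_squared_add[of "of_int k * pi"] s by simp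
  then have c: "\<bar>cos (of_int k * pi)\<bar> = 1" unfolding power2_eq_1_iff by auto
  have "cos (x + of_int k * pi) = cos x * cos (of_int k * pi)" unfolding cos_add s by simp
  then show ?thesis by (simp only: abs_mult c mult_1_right)
qed

lemma per_point:
  assumes "0 \<le> c" "c \<le> pi" "0 < h" "h \<le> pi" "-pi/2 \<le> x" "x \<le> pi/2" "0 \<le> w" "w \<le> 1"
  shows "w * (2 * sin (h/2) * cos x) \<le> (Gc c (x+h/2) - Gc c (x-h/2)) + w*h*cos c"
proof -
  have e: "2 * sin (h/2) * cos x = sin (x+h/2) - sin (x-h/2)"
    by (simp add: sin_add sin_diff)
  have "phc c (x+h/2) - phc c (x-h/2) \<le> Gc c (x+h/2) - Gc c (x-h/2)"
    using assms by (intro D_mono) auto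
  then have X: "2 * sin (h/2) * cos x - h * cos c \<le> Gc c (x+h/2) - Gc c (x-h/2)"
    unfolding e phc_def by (simp add: algebra_simps)
  have P: "0 \<le> Gc c (x+h/2) - Gc c (x-h/2)" using Gc_mono[of c "x-h/2" "x+h/2"] assms by auto
  have "w * (2 * sin (h/2) * cos x - h * cos c) \<le> Gc c (x+h/2) - Gc c (x-h/2)"
  proof (cases "2 * sin (h/2) * cos x - h * cos c \<le> 0")
    case True then have "w * (2 * sin (h/2) * cos x - h * cos c) \<le> 0"
      using assms(7) mult_nonneg_nonpos by blast
    then show ?thesis using P by linarith
  next
    case False
    then have "w * (2 * sin (h/2) * cos x - h * cos c) \<le> 1 * (2 * sin (h/2) * cos x - h * cos c)"
      using assms by (intro mult_right_mono) auto
    then show ?thesis using X by simp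
  qed
  then show ?thesis by (simp add: algebra_simps)
qed

lemma core:
  fixes n :: nat and ph :: real and w :: "nat \<Rightarrow> real"
  assumes n: "n \<ge> 1" and w: "\<And>y. y < n \<Longrightarrow> 0 \<le> w y \<and> w y \<le> 1"
  shows "(\<Sum>y<n. w y * \<bar>cos (real y * pi / real n - ph)\<bar>)
           \<le> sin (pi/2 * ((\<Sum>y<n. w y) / real n)) / sin (pi / (2 * real n))"
proof -
  define h where "h = pi / real n"
  define S where "S = (\<Sum>y<n. w y)"
  define c where "c = pi/2 * (S / real n)"
  have npos: "real n > 0" using n by simp
  have hpos: "0 < h" unfolding h_def using npos by simp
  have hle: "h \<le> pi" unfolding h_def using n by (simp add: divide_le_eq)
  have nh: "real n * h = pi" unfolding h_def using npos by simp
  have S0: "0 \<le> S" unfolding S_def using w by (intro sum_nonneg) auto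
  have "S \<le> (\<Sum>y<n. 1)" unfolding S_def using w by (intro sum_mono) auto
  then have Sn: "S \<le> real n" by simp
  have c0: "0 \<le> c" unfolding c_def using S0 npos by simp
  have c1: "c \<le> pi/2" unfolding c_def using Sn npos by (simp add: divide_le_eq)
  define k :: int where "k = \<lfloor>(ph + pi/2)/pi\<rfloor>"
  define p0 where "p0 = ph - of_int k * pi"
  have k1: "of_int k \<le> (ph + pi/2)/pi" "(ph + pi/2)/pi < of_int k + 1"
    unfolding k_def by linarith+
  then have "of_int k * pi \<le> ph + pi/2" "ph + pi/2 < (of_int k + 1) * pi"
    by (simp_all add: le_divide_eq divide_less_eq)
  then have p0b: "-pi/2 \<le> p0" "p0 < pi/2" unfolding p0_def by (simp_all add: algebra_simps)
  have absc: "\<bar>cos (t - ph)\<bar> = \<bar>cos (t - p0)\<bar>" for t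
  proof -
    have "t - ph = (t - p0) + of_int (-k) * pi" unfolding p0_def by simp
    then have "cos (t - ph) = cos ((t - p0) + of_int (-k) * pi)" by (rule arg_cong)
    then show ?thesis using abs_cos_shift[of "t - p0" "-k"] by presburger
  qed
  define j :: "nat \<Rightarrow> int" where "j y = (if real y * h - p0 < pi/2 then int y else int y - int n)" for y
  define x where "x y = real_of_int (j y) * h - p0" for y
  have yh: "real y * h < pi" if "y < n" for y
  proof -
    have "real y * h < real n * h" using that hpos by simp
    then show ?thesis using nh by simp
  qed
  have xb: "-pi/2 \<le> x y \<and> x y < pi/2" if "y < n" for y
  proof (cases "real y * h - p0 < pi/2")
    case True
    have "0 \<le> real y * h" using hpos by simp
    then show ?thesis unfolding x_def j_def using True p0b by simp
  next
    case False
    then have "x y = real y * h - p0 - pi" unfolding x_def j_def using nh by (simp add: algebra_simps)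
    then show ?thesis using False yh[OF that] p0b by simp
  qed
  have xc: "\<bar>cos (real y * h - p0)\<bar> = cos (x y)" if "y < n" for y
  proof (cases "real y * h - p0 < pi/2")
    case True
    then have "x y = real y * h - p0" unfolding x_def j_def by simp
    then show ?thesis using xb[OF that] cos_ge_zero[of "x y"] by simp
  next
    case False
    then have e: "x y = real y * h - p0 - pi" unfolding x_def j_def using nh by (simp add: algebra_simps)
    then have "real y * h - p0 = x y + pi" by simp
    then have "cos (real y * h - p0) = - cos (x y)" by simp
    then show ?thesis using xb[OF that] cos_ge_zero[of "x y"] by simp
  qed
  define U where "U i = Gc c (real_of_int i * h - p0 + h/2) - Gc c (real_of_int i * h - p0 - h/2)" for i
  have py: "w y * (2 * sin (h/2) * cos (x y)) \<le> U (j y) + w y * h * cos c" if "y < n" for y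
    using per_point[of c h "x y" "w y"] c0 c1 hpos hle xb[OF that] w[OF that]
    unfolding U_def x_def by simp
  have sum1: "(\<Sum>y<n. w y * (2 * sin (h/2) * cos (x y))) \<le> (\<Sum>y<n. U (j y)) + h * cos c * S"
  proof -
    have "(\<Sum>y<n. w y * (2 * sin (h/2) * cos (x y))) \<le> (\<Sum>y<n. U (j y) + w y * h * cos c)"
      using py by (intro sum_mono) auto
    also have "\<dots> = (\<Sum>y<n. U (j y)) + h * cos c * S"
      unfolding S_def by (simp add: sum.distrib sum_distrib_left algebra_simps)
    finally show ?thesis .
  qed
  define A where "A = \<lceil>(p0 - pi/2) / h\<rceil>"
  have jA: "A \<le> j y \<and> j y < A + int n" if "y < n" for y
  proof -
    have "-pi/2 \<le> x y" "x y < pi/2" using xb[OF that] by auto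
    then have "(p0 - pi/2) \<le> real_of_int (j y) * h" "real_of_int (j y) * h < p0 + pi/2"
      unfolding x_def by auto
    then have a: "(p0 - pi/2) / h \<le> real_of_int (j y)" and b: "real_of_int (j y) < (p0 + pi/2) / h"
      using hpos by (simp_all add: divide_le_eq pos_less_divide_eq)
    have "(p0 + pi/2) / h = (p0 - pi/2) / h + real n"
      using nh hpos by (simp add: field_simps)
    also have "\<dots> \<le> real_of_int A + real n" unfolding A_def by simp
    finally have "real_of_int (j y) < real_of_int (A + int n)" using b by simp
    then have "j y < A + int n" by linarith
    moreover have "A \<le> j y" unfolding A_def using a by (simp add: ceiling_le)
    ultimately show ?thesis by simp
  qed
  define ix where "ix y = nat (j y - A)" for y
  have ixb: "ix y < n" and ixj: "j y = A + int (ix y)" if "y < n" for y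
    using jA[OF that] unfolding ix_def by auto
  have jinj: "inj_on j {..<n}"
  proof (rule inj_onI)
    fix y y' assume "y \<in> {..<n}" "y' \<in> {..<n}" "j y = j y'"
    then show "y = y'" unfolding j_def by (auto split: if_splits)
  qed
  have ixinj: "inj_on ix {..<n}"
  proof (rule inj_onI)
    fix y y' assume a: "y \<in> {..<n}" "y' \<in> {..<n}" "ix y = ix y'"
    then have "j y = j y'" using ixj by auto
    then show "y = y'" using jinj a by (auto dest: inj_onD)
  qed
  define g where "g i = Gc c ((real_of_int A + real i) * h - p0 - h/2)" for i :: nat
  define V where "V i = g (Suc i) - g i" for i
  have UV: "U (A + int i) = V i" for i
    unfolding U_def V_def g_def by (simp add: algebra_simps)
  have V0: "0 \<le> V i" for i
    unfolding V_def g_def using Gc_mono[of c] c0 c1 hpos by (simp add: algebra_simps)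
  have tele: "(\<Sum>y<n. U (j y)) \<le> phc c c - phc c (-c)"
  proof -
    have "(\<Sum>y<n. U (j y)) = (\<Sum>y<n. V (ix y))"
      using ixj UV by (intro sum.cong) auto
    also have "\<dots> = (\<Sum>i\<in>ix ` {..<n}. V i)"
      using sum.reindex[OF ixinj, of V] by simp
    also have "\<dots> \<le> (\<Sum>i<n. V i)"
      using ixb V0 by (intro sum_mono2) auto
    also have "\<dots> = g n - g 0" unfolding V_def by (rule sum_lessThan_telescope)
    also have "\<dots> \<le> phc c c - phc c (-c)"
      unfolding g_def using Gc_bounds[of c "(real_of_int A + real n) * h - p0 - h / 2"]
        Gc_bounds[of c "(real_of_int A + real 0) * h - p0 - h / 2"] c0 c1 by simp
    finally show ?thesis .
  qed
  have ph_eq: "phc c c - phc c (-c) = 2 * sin c - 2 * c * cos c" unfolding phc_def by simp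
  have hS: "h * cos c * S = 2 * c * cos c" unfolding h_def c_def using npos by (simp add: field_simps)
  have main: "2 * sin (h/2) * (\<Sum>y<n. w y * cos (x y)) \<le> 2 * sin c"
  proof -
    have "2 * sin (h/2) * (\<Sum>y<n. w y * cos (x y)) = (\<Sum>y<n. w y * (2 * sin (h/2) * cos (x y)))"
      by (simp add: sum_distrib_left algebra_simps)
    also have "\<dots> \<le> 2 * sin c" using sum1 tele ph_eq hS by linarith
    finally show ?thesis .
  qed
  have sh: "0 < sin (h/2)" using hpos hle by (intro sin_gt_zero) auto
  have lhs: "(\<Sum>y<n. w y * \<bar>cos (real y * pi / real n - ph)\<bar>) = (\<Sum>y<n. w y * cos (x y))"
  proof (intro sum.cong refl)
    fix y assume "y \<in> {..<n}"
    then have "\<bar>cos (real y * pi / real n - ph)\<bar> = cos (x y)"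
      using absc[of "real y * h"] xc[of y] unfolding h_def by simp
    then show "w y * \<bar>cos (real y * pi / real n - ph)\<bar> = w y * cos (x y)" by simp
  qed
  have "(\<Sum>y<n. w y * cos (x y)) \<le> sin c / sin (h/2)"
    using main sh by (simp add: le_divide_eq mult.commute)
  moreover have "h/2 = pi / (2 * real n)" unfolding h_def by simp
  ultimately show ?thesis unfolding lhs c_def S_def by simp
qed

lemma qform: "(\<Sum>i\<in>UNIV. cnj (v$i) * ((A::cmat2) *v v)$i) =
   cnj(v$1)*(A$1$1* v$1 + A$1$2* v$2) + cnj(v$2)*(A$2$1* v$1 + A$2$2* v$2)"
  by (simp add: sum_2 matrix_vector_mult_def)

lemma psd_q:
  assumes "psd2 S"
  shows "Im (cnj a*(S$1$1*a + S$1$2*b) + cnj b*(S$2$1*a + S$2$2*b)) = 0 \<and>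
         0 \<le> Re (cnj a*(S$1$1*a + S$1$2*b) + cnj b*(S$2$1*a + S$2$2*b))"
proof -
  define v :: "complex^2" where "v = (\<chi> i. if i = 1 then a else b)"
  have v1: "v$1 = a" and v2: "v$2 = b" unfolding v_def by auto
  from assms have "let q = (\<Sum>i\<in>UNIV. cnj (v $ i) * (S *v v) $ i) in Im q = 0 \<and> Re q \<ge> 0"
    unfolding psd2_def by blast
  then show ?thesis unfolding Let_def qform v1 v2 .
qed

lemma psd_herm:
  assumes "psd2 S"
  shows "S$2$1 = cnj (S$1$2)"
proof -
  have "adjoint2 S = S" using assms unfolding psd2_def by blast
  then have "adjoint2 S $ 2 $ 1 = S $ 2 $ 1" by simp
  then show ?thesis unfolding adjoint2_def by simp
qed

lemma trace_M:
  "trace ((cos th *\<^sub>R pauliZ + sin th *\<^sub>R pauliX) ** (S::cmat2)) =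
     complex_of_real (cos th) * (S$2$2 - S$1$1) + complex_of_real (sin th) * (S$1$2 + S$2$1)"
  apply (simp add: trace_def sum_2 matrix_matrix_mult_def pauliZ_def pauliX_def)
  apply (simp add: scaleR_conv_of_real algebra_simps)
  done

lemma bloch:
  assumes "psd2 S"
  shows "\<exists>r ph t. trace S = complex_of_real t \<and> 0 \<le> r \<and> r \<le> t \<and>
     (\<forall>th. trace ((cos th *\<^sub>R pauliZ + sin th *\<^sub>R pauliX) ** S) = complex_of_real (r * cos (th - ph)))"
proof -
  define p where "p = S$1$1"
  define q where "q = S$2$2"
  define w where "w = S$1$2"
  have h21: "S$2$1 = cnj w" using psd_herm[OF assms] unfolding w_def .
  have Q: "Im (cnj a*(p*a + w*b) + cnj b*(cnj w*a + q*b)) = 0 \<and>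
         0 \<le> Re (cnj a*(p*a + w*b) + cnj b*(cnj w*a + q*b))" for a b
    using psd_q[OF assms, of a b] unfolding h21 p_def[symmetric] q_def[symmetric] w_def[symmetric] .
  obtain P Pi where pP: "p = Complex P Pi" by (cases p)
  obtain R Ri where qR: "q = Complex R Ri" by (cases q)
  obtain u v where wuv: "w = Complex u v" by (cases w)
  have "Pi = 0" "0 \<le> P" using Q[of 1 0] unfolding pP by auto
  have "Ri = 0" "0 \<le> R" using Q[of 0 1] unfolding qR by auto
  have q1: "0 \<le> R * (P * R - (u^2 + v^2))"
    using Q[of "complex_of_real R" "- cnj w"] unfolding pP qR wuv \<open>Pi = 0\<close> \<open>Ri = 0\<close>
    by (simp add: power2_eq_square algebra_simps)
  have q2: "0 \<le> P * (P * R - (u^2 + v^2))"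
    using Q[of "- w" "complex_of_real P"] unfolding pP qR wuv \<open>Pi = 0\<close> \<open>Ri = 0\<close>
    by (simp add: power2_eq_square algebra_simps)
  have q3: "0 \<le> P - 2 * (u^2 + v^2) + R * (u^2 + v^2)"
    using Q[of 1 "- cnj w"] unfolding pP qR wuv \<open>Pi = 0\<close> \<open>Ri = 0\<close>
    by (simp add: power2_eq_square algebra_simps)
  have key: "u^2 + v^2 \<le> P * R"
  proof (cases "P + R > 0")
    case True
    have "0 \<le> (P + R) * (P * R - (u^2 + v^2))" using q1 q2 by (simp add: algebra_simps)
    then show ?thesis using True by (simp add: zero_le_mult_iff)
  next
    case False
    then have "P = 0" "R = 0" using \<open>0 \<le> P\<close> \<open>0 \<le> R\<close> by auto
    then show ?thesis using q3 by (simp add: add_nonneg_nonneg)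
  qed
  define A where "A = R - P"
  define B where "B = 2 * u"
  define z where "z = Complex A B"
  define r where "r = cmod z"
  define ph where "ph = Arg z"
  have zr: "rcis r ph = z" unfolding r_def ph_def by (rule rcis_cmod_Arg)
  have AB: "A = r * cos ph" "B = r * sin ph"
    using arg_cong[OF zr, of Re] arg_cong[OF zr, of Im] unfolding z_def by auto
  have r0: "0 \<le> r" unfolding r_def by simp
  have "r^2 = A^2 + B^2" unfolding r_def z_def by (simp add: cmod_def)
  also have "\<dots> \<le> (P + R)^2" unfolding A_def B_def using key
    by (simp add: power2_eq_square algebra_simps) (smt (verit) zero_le_square)
  finally have rt: "r \<le> P + R" using r0 \<open>0 \<le> P\<close> \<open>0 \<le> R\<close> by (simp add: power2_le_iff_abs_le abs_of_nonneg)  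
  have tr: "trace S = complex_of_real (P + R)"
    unfolding trace_def sum_2 using pP qR \<open>Pi = 0\<close> \<open>Ri = 0\<close> p_def q_def by (simp add: Complex_eq)
  have "trace ((cos th *\<^sub>R pauliZ + sin th *\<^sub>R pauliX) ** S) = complex_of_real (r * cos (th - ph))" for th
  proof -
    have "trace ((cos th *\<^sub>R pauliZ + sin th *\<^sub>R pauliX) ** S)
        = complex_of_real (cos th * A + sin th * B)"
      unfolding trace_M h21 using wuv[unfolded w_def] p_def q_def pP qR wuv \<open>Pi = 0\<close> \<open>Ri = 0\<close> A_def B_def
      by (simp add: complex_eq_iff)
    also have "cos th * A + sin th * B = r * cos (th - ph)"
      unfolding AB cos_diff by (simp add: algebra_simps)
    finally show ?thesis .
  qed
  then show ?thesis using tr r0 rt by blast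
qed

lemma trace_lin: "trace ((M::cmat2) ** (\<Sum>l\<in>L. c l *\<^sub>R S l)) = (\<Sum>l\<in>L. complex_of_real (c l) * trace (M ** S l))"
  apply (simp add: trace_def matrix_matrix_mult_def sum_component sum_distrib_left)
  apply (simp add: sum_distrib_left scaleR_conv_of_real algebra_simps)
  apply (rule trans[OF sum.cong[OF refl sum.swap]])
  apply (rule sum.swap)
  done

lemma trace_lin2: "trace (\<Sum>l\<in>L. c l *\<^sub>R (S l::cmat2)) = (\<Sum>l\<in>L. complex_of_real (c l) * trace (S l))"
  apply (simp add: trace_def sum_component sum_distrib_left)
  apply (subst sum.swap) 
  apply (simp add: scaleR_conv_of_real)
  done

lemma sin_concave: "concave_on {0..1} (\<lambda>x::real. sin (pi/2 * x))"
  by (rule f''_le0_imp_concave[where f'="\<lambda>x. pi/2 * cos (pi/2*x)" and f''="\<lambda>x. - (pi*pi/4) * sin (pi/2*x)"])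
     (auto intro!: derivative_eq_intros mult_nonneg_nonneg sin_ge_zero simp: algebra_simps)

theorem mainTheorem8:
  fixes n :: nat and rho :: "nat \<Rightarrow> outcome \<Rightarrow> cmat2"
  assumes "n \<ge> 1" and "LHS_assemblage n rho"
  shows "cmod (W_n n rho) \<le> sin (pi / 2 * Re (T_n n rho)) / (real n * sin (pi / (2 * real n)))"
proof -
  obtain L :: "nat set" and sigma :: "nat \<Rightarrow> cmat2" and p :: "outcome \<Rightarrow> nat \<Rightarrow> nat \<Rightarrow> real" where fin: "finite L" and psd: "\<forall>l\<in>L. psd2 (sigma l)"
    and tr1: "(\<Sum>l\<in>L. trace (sigma l)) = 1"
    and pr: "\<forall>y<n. \<forall>l\<in>L. (\<forall>b. p b y l \<ge> 0) \<and> p Out0 y l + p Out1 y l + p OutNull y l = 1"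
    and rh: "\<forall>y<n. \<forall>b. rho y b = (\<Sum>l\<in>L. p b y l *\<^sub>R sigma l)"
    using assms(2) unfolding LHS_assemblage_def by (elim exE conjE) (rule that; assumption)
  define Pq where "Pq l x \<longleftrightarrow> trace (sigma l) = complex_of_real (snd (snd x)) \<and> 0 \<le> fst x \<and> fst x \<le> snd (snd x) \<and>
     (\<forall>th. trace ((cos th *\<^sub>R pauliZ + sin th *\<^sub>R pauliX) ** sigma l) = complex_of_real (fst x * cos (th - fst (snd x))))"
    for l and x :: "real \<times> real \<times> real"
  have "\<forall>l\<in>L. \<exists>x. Pq l x"
  proof
    fix l assume "l \<in> L"
    then have "psd2 (sigma l)" using psd by simp
    from bloch[OF this] obtain r0 ph0 t0 where
      H: "trace (sigma l) = complex_of_real t0 \<and> 0 \<le> r0 \<and> r0 \<le> t0 \<and>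
     (\<forall>th. trace ((cos th *\<^sub>R pauliZ + sin th *\<^sub>R pauliX) ** sigma l) = complex_of_real (r0 * cos (th - ph0)))"
      by (elim exE)
    have "Pq l (r0, ph0, t0)" unfolding Pq_def fst_conv snd_conv by (rule H)
    then show "\<exists>x. Pq l x" by (rule exI)
  qed
  then have "\<exists>f. \<forall>l\<in>L. Pq l (f l)" by (rule bchoice)
  then obtain f where f: "\<forall>l\<in>L. Pq l (f l)" by blast
  define r where "r l = fst (f l)" for l
  define ph where "ph l = fst (snd (f l))" for l
  define t where "t l = snd (snd (f l))" for l
  have rpt: "trace (sigma l) = complex_of_real (t l) \<and> 0 \<le> r l \<and> r l \<le> t l \<and>
     (\<forall>th. trace ((cos th *\<^sub>R pauliZ + sin th *\<^sub>R pauliX) ** sigma l) = complex_of_real (r l * cos (th - ph l)))"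
    if "l \<in> L" for l
  proof -
    have "Pq l (f l)" using f that by (rule bspec)
    then show ?thesis unfolding Pq_def r_def ph_def t_def .
  qed
  define s0 where "s0 = sin (pi / (2 * real n))"
  have npos: "0 < real n" using assms(1) by simp
  have "1 < 2 * real n" using assms(1) by simp
  then have "pi * 1 < pi * (2 * real n)" using pi_gt_zero by (intro mult_strict_left_mono) auto
  then have "pi / (2 * real n) < pi" using npos by (simp add: divide_less_eq)
  then have s0pos: "0 < s0" unfolding s0_def using npos
    by (intro sin_gt_zero) auto
  define d where "d y l = p Out0 y l - p Out1 y l" for y l
  define q where "q y l = p Out0 y l + p Out1 y l" for y l
  define Tl where "Tl l = (\<Sum>y<n. q y l) / real n" for l
  have q01: "0 \<le> q y l \<and> q y l \<le> 1" if "y < n" "l \<in> L" for y l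
  proof -
    have "0 \<le> p Out0 y l" "0 \<le> p Out1 y l" "0 \<le> p OutNull y l" "p Out0 y l + p Out1 y l + p OutNull y l = 1"
      using pr that by auto
    then show ?thesis unfolding q_def by linarith
  qed
  have dq: "\<bar>d y l\<bar> \<le> q y l" if "y < n" "l \<in> L" for y l
  proof -
    have "0 \<le> p Out0 y l" "0 \<le> p Out1 y l"
      using pr that by auto
    then show ?thesis unfolding q_def d_def by linarith
  qed
  have Tl01: "0 \<le> Tl l \<and> Tl l \<le> 1" if "l \<in> L" for l
  proof -
    have "0 \<le> (\<Sum>y<n. q y l)" using q01 that by (intro sum_nonneg) auto
    moreover have "(\<Sum>y<n. q y l) \<le> (\<Sum>y<n. 1)" using q01 that by (intro sum_mono) auto
    ultimately show ?thesis unfolding Tl_def using npos by (simp add: divide_le_eq)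
  qed
  have t0: "0 \<le> t l" if "l \<in> L" for l using rpt[OF that] by linarith
  have tsum: "(\<Sum>l\<in>L. t l) = 1"
  proof -
    have "complex_of_real (\<Sum>l\<in>L. t l) = 1" using tr1 rpt by simp
    then show ?thesis by (metis of_real_eq_1_iff)
  qed
  define Wr where "Wr = (1 / real n) * (\<Sum>y<n. \<Sum>l\<in>L. d y l * (r l * cos (theta n y - ph l)))"
  have W: "W_n n rho = complex_of_real Wr"
  proof -
    have "trace ((cos (theta n y) *\<^sub>R pauliZ + sin (theta n y) *\<^sub>R pauliX) ** (rho y Out0 - rho y Out1))
       = complex_of_real (\<Sum>l\<in>L. d y l * (r l * cos (theta n y - ph l)))" if "y < n" for y
    proof -
      have "rho y Out0 - rho y Out1 = (\<Sum>l\<in>L. d y l *\<^sub>R sigma l)"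
        using rh that unfolding d_def by (simp add: sum_subtractf[symmetric] scaleR_diff_left)
      then show ?thesis using rpt by (simp add: trace_lin)
    qed
    then show ?thesis unfolding W_n_def Wr_def by simp
  qed
  have T: "Re (T_n n rho) = (\<Sum>l\<in>L. t l * Tl l)"
  proof -
    have "trace (rho y Out0 + rho y Out1) = complex_of_real (\<Sum>l\<in>L. q y l * t l)" if "y < n" for y
    proof -
      have "rho y Out0 + rho y Out1 = (\<Sum>l\<in>L. q y l *\<^sub>R sigma l)"
        using rh that unfolding q_def by (simp add: sum.distrib[symmetric] scaleR_add_left)
      then show ?thesis using rpt by (simp add: trace_lin2)
    qed
    then have "T_n n rho = complex_of_real ((1 / real n) * (\<Sum>y<n. \<Sum>l\<in>L. q y l * t l))"
      unfolding T_n_def by simp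
    also have "(1 / real n) * (\<Sum>y<n. \<Sum>l\<in>L. q y l * t l) = (\<Sum>l\<in>L. t l * Tl l)"
      unfolding Tl_def by (subst sum.swap) (simp add: sum_distrib_left sum_distrib_right sum_divide_distrib algebra_simps)
    finally show ?thesis by simp
  qed
  have per_l: "\<bar>\<Sum>y<n. d y l * (r l * cos (theta n y - ph l))\<bar> \<le> t l * (sin (pi/2 * Tl l) / s0)"
    if l: "l \<in> L" for l
  proof -
    have "\<bar>\<Sum>y<n. d y l * (r l * cos (theta n y - ph l))\<bar> \<le> (\<Sum>y<n. \<bar>d y l * (r l * cos (theta n y - ph l))\<bar>)"
      by (rule sum_abs)
    also have "\<dots> \<le> (\<Sum>y<n. r l * (q y l * \<bar>cos (real y * pi / real n - ph l)\<bar>))"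
    proof (intro sum_mono)
      fix y assume "y \<in> {..<n}"
      then have "\<bar>d y l\<bar> \<le> q y l" using dq l by auto
      then have "\<bar>d y l\<bar> * \<bar>cos (theta n y - ph l)\<bar> \<le> q y l * \<bar>cos (theta n y - ph l)\<bar>"
        by (intro mult_right_mono) auto
      then have "r l * (\<bar>d y l\<bar> * \<bar>cos (theta n y - ph l)\<bar>) \<le> r l * (q y l * \<bar>cos (theta n y - ph l)\<bar>)"
        using rpt[OF l] by (intro mult_left_mono) auto
      then show "\<bar>d y l * (r l * cos (theta n y - ph l))\<bar> \<le> r l * (q y l * \<bar>cos (real y * pi / real n - ph l)\<bar>)"
        using rpt[OF l] unfolding theta_def by (simp add: abs_mult algebra_simps)
    qed
    also have "\<dots> = r l * (\<Sum>y<n. q y l * \<bar>cos (real y * pi / real n - ph l)\<bar>)"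
      by (simp add: sum_distrib_left)
    also have "\<dots> \<le> r l * (sin (pi/2 * Tl l) / s0)"
      using core[of n "\<lambda>y. q y l" "ph l"] assms(1) q01 l rpt[OF l] unfolding Tl_def s0_def
      by (intro mult_left_mono) auto
    also have "\<dots> \<le> t l * (sin (pi/2 * Tl l) / s0)"
    proof (intro mult_right_mono)
      show "r l \<le> t l" using rpt[OF l] by auto
      have "0 \<le> sin (pi/2 * Tl l)" using Tl01[OF l] by (intro sin_ge_zero) auto
      then show "0 \<le> sin (pi/2 * Tl l) / s0" using s0pos by simp
    qed
    finally show ?thesis .
  qed
  have Lne: "L \<noteq> {}" using tsum by auto
  have jen: "(\<Sum>l\<in>L. t l * sin (pi/2 * Tl l)) \<le> sin (pi/2 * (\<Sum>l\<in>L. t l * Tl l))"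
    using concave_on_sum[OF fin Lne sin_concave tsum, of Tl] t0 Tl01 by auto
  have "cmod (W_n n rho) = \<bar>Wr\<bar>" unfolding W by simp
  also have "\<dots> \<le> (1 / real n) * (\<Sum>l\<in>L. \<bar>\<Sum>y<n. d y l * (r l * cos (theta n y - ph l))\<bar>)"
    unfolding Wr_def using npos
    apply (subst sum.swap)
    apply (simp add: abs_mult)
    apply (intro divide_right_mono sum_abs)
    apply simp
    done
  also have "\<dots> \<le> (1 / real n) * (\<Sum>l\<in>L. t l * (sin (pi/2 * Tl l) / s0))"
    using per_l npos by (intro mult_left_mono sum_mono) auto
  also have "\<dots> = (\<Sum>l\<in>L. t l * sin (pi/2 * Tl l)) / (real n * s0)"
    by (simp add: sum_divide_distrib sum_distrib_left)
  also have "\<dots> \<le> sin (pi/2 * (\<Sum>l\<in>L. t l * Tl l)) / (real n * s0)"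
    using jen npos s0pos by (intro divide_right_mono) auto
  finally show ?thesis unfolding T s0_def by simp
qed

end
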